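(* Let $s$ be an integer with $|s|\ge 10^5$ such that $3s^2-4s+4$ is a perfect square and $s^2+2$ is squarefree. Let $r_1,r_2,r_3,r_4$ be the roots of $F_s(t)= t^4 + (4s^3 - 4s^2 + 8s - 4)t^3 + (-6s^2 - 6)t^2 + 4t + 1$, labeled so that the generator $\sigma$ of the cyclic Galois group of the splitting field satisfies $\sigma(r_j)=r_{j+1}$ (indices mod 4) and $r_1\approx -4s^3$ is the root of largest absolute value. Let $$R'=\left|\det\begin{pmatrix}\log|r_1|&\log|r_2|&\log|r_3|\\ \log|r_2|&\log|r_3|&\log|r_4|\\ \log|r_3|&\log|r_4|&\log|r_1|\end{pmatrix}\right|$$ and $\epsilon=s^2+1+|s|\sqrt{s^2+2}$. Then $$R'=\tfrac14\left(\log^2|r_1/r_3|+\log^2|r_2/r_4|\right)(2\log\epsilon)\quad\text{and}\quad \frac{R'}{\log\epsilon}<9\log^2|s|.$$ *)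

theory Defs
  imports "HOL-Analysis.Analysis" "HOL-Computational_Algebra.Polynomial"
    "HOL-Computational_Algebra.Squarefree"
begin

definition F_poly :: "int \<Rightarrow> complex poly" where
  "F_poly s = pCons 1 (pCons 4 (pCons (of_int (- 6 * s ^ 2 - 6)) (pCons (of_int (4 * s ^ 3 - 4 * s ^ 2 + 8 * s - 4)) (pCons 1 0))))"

definition subfield_C :: "complex set \<Rightarrow> bool" where
  "subfield_C K \<longleftrightarrow> 0 \<in> K \<and> 1 \<in> K \<and>
     (\<forall>x\<in>K. \<forall>y\<in>K. x + y \<in> K \<and> x * y \<in> K) \<and>
     (\<forall>x\<in>K. - x \<in> K) \<and> (\<forall>x\<in>K. inverse x \<in> K)"

text \<open>The subfield of C generated (over Q) by a set S; for S the roots of a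
  rational polynomial this is its splitting field inside C.\<close>
definition gen_field :: "complex set \<Rightarrow> complex set" where
  "gen_field S = \<Inter> {K. subfield_C K \<and> S \<subseteq> K}"

text \<open>Field automorphisms of K (they automatically fix Q, so these are exactly
  the elements of the Galois group of K over Q).\<close>
definition field_aut :: "complex set \<Rightarrow> (complex \<Rightarrow> complex) \<Rightarrow> bool" where
  "field_aut K \<sigma> \<longleftrightarrow> bij_betw \<sigma> K K \<and> \<sigma> 1 = 1 \<and>
     (\<forall>x\<in>K. \<forall>y\<in>K. \<sigma> (x + y) = \<sigma> x + \<sigma> y \<and> \<sigma> (x * y) = \<sigma> x * \<sigma> y)"

definition generates_aut :: "complex set \<Rightarrow> (complex \<Rightarrow> complex) \<Rightarrow> bool" where
  "generates_aut K \<sigma> \<longleftrightarrow> field_aut K \<sigma> \<and>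
     (\<forall>\<tau>. field_aut K \<tau> \<longrightarrow> (\<exists>k::nat. \<forall>x\<in>K. \<tau> x = (\<sigma> ^^ k) x))"

end

theory Submission
  imports Defs
begin


lemma det_formula:
  fixes a1 a2 a3 a4 :: real
  assumes "a4 = -(a1+a2+a3)"
  shows "det (vector [vector [a1, a2, a3], vector [a2, a3, a4], vector [a3, a4, a1]] :: real^3^3)
     = -(1/4) * (a1 - a2 + a3 - a4) * ((a1-a3)^2 + (a2-a4)^2)"
  unfolding det_3 assms by simp algebra

definition Qw :: "int \<Rightarrow> complex \<Rightarrow> complex \<Rightarrow> complex" where
  "Qw s w t = t^2 + (of_int (2 * (s^3-s^2+2 * s-1)) + of_int (2 * (s^2-s+1)) * w) * t
      + (of_int (-(s^2+1)) - of_int s * w)"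

lemma F_factor:
  assumes "w^2 = of_int (s^2+2)"
  shows "poly (F_poly s) t = Qw s w t * Qw s (-w) t"
  using assms unfolding F_poly_def Qw_def by simp algebra




lemma subfield_gen: "subfield_C (gen_field S)"
  unfolding subfield_C_def gen_field_def by auto

lemma subset_gen: "S \<subseteq> gen_field S"
  unfolding gen_field_def by auto

context
  fixes K :: "complex set" and \<sigma> :: "complex \<Rightarrow> complex"
  assumes K: "subfield_C K" and A: "field_aut K \<sigma>"
begin

lemma K0: "0 \<in> K" and K1: "1 \<in> K" using K unfolding subfield_C_def by auto
lemma Kadd: "x \<in> K \<Longrightarrow> y \<in> K \<Longrightarrow> x + y \<in> K" using K unfolding subfield_C_def by auto
lemma Kmult: "x \<in> K \<Longrightarrow> y \<in> K \<Longrightarrow> x * y \<in> K" using K unfolding subfield_C_def by auto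
lemma Kneg: "x \<in> K \<Longrightarrow> - x \<in> K" using K unfolding subfield_C_def by auto
lemma Kinv: "x \<in> K \<Longrightarrow> inverse x \<in> K" using K unfolding subfield_C_def by auto
lemma Kdiff: "x \<in> K \<Longrightarrow> y \<in> K \<Longrightarrow> x - y \<in> K"
  using Kadd[of x "-y"] Kneg[of y] by simp
lemma Kpow2: "x \<in> K \<Longrightarrow> x^2 \<in> K" using Kmult[of x x] by (simp add: power2_eq_square)
lemma Knat: "of_nat n \<in> K"
  by (induction n) (auto simp: K0 K1 Kadd)
lemma Kint: "of_int n \<in> K"
proof (cases n rule: int_cases)
  case (nonneg m) then show ?thesis using Knat[of m] by simp
next
  case (neg m) then show ?thesis using Kneg[OF Knat[of "Suc m"]] by simp
qed

lemma sadd: "x \<in> K \<Longrightarrow> y \<in> K \<Longrightarrow> \<sigma> (x + y) = \<sigma> x + \<sigma> y" using A unfolding field_aut_def by auto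
lemma smult: "x \<in> K \<Longrightarrow> y \<in> K \<Longrightarrow> \<sigma> (x * y) = \<sigma> x * \<sigma> y" using A unfolding field_aut_def by auto
lemma s1: "\<sigma> 1 = 1" using A unfolding field_aut_def by auto
lemma s0: "\<sigma> 0 = 0" using sadd[OF K0 K0] by simp
lemma sneg: assumes "x \<in> K" shows "\<sigma> (- x) = - \<sigma> x"
proof -
  have "\<sigma> x + \<sigma> (- x) = 0" using sadd[of x "-x"] Kneg[of x] s0 assms by simp
  then show ?thesis by (metis add.commute eq_neg_iff_add_eq_0)
qed
lemma sdiff: "x \<in> K \<Longrightarrow> y \<in> K \<Longrightarrow> \<sigma> (x - y) = \<sigma> x - \<sigma> y"
  using sadd[of x "-y"] sneg[of y] Kneg[of y] by simp
lemma spow2: "x \<in> K \<Longrightarrow> \<sigma> (x^2) = (\<sigma> x)^2" using smult[of x x] by (simp add: power2_eq_square)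
lemma snat: "\<sigma> (of_nat n) = of_nat n"
  by (induction n) (auto simp: s0 s1 sadd K1 Knat)
lemma sint: "\<sigma> (of_int n) = of_int n"
proof (cases n rule: int_cases)
  case (nonneg m) then show ?thesis using snat[of m] by simp
next
  case (neg m) then show ?thesis using sneg[OF Knat[of "Suc m"]] snat[of "Suc m"] by simp
qed

lemma sgen: "w \<in> K \<Longrightarrow> x \<in> K \<Longrightarrow> A \<in> K \<Longrightarrow> B \<in> K \<Longrightarrow> C \<in> K \<Longrightarrow> D \<in> K \<Longrightarrow>
   \<sigma> A = A \<Longrightarrow> \<sigma> B = B \<Longrightarrow> \<sigma> C = C \<Longrightarrow> \<sigma> D = D \<Longrightarrow>
   \<sigma> (x^2 + (A + B*w)*x + (C - D*w)) = (\<sigma> x)^2 + (A + B*\<sigma> w)*\<sigma> x + (C - D*\<sigma> w)"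
  by (simp add: sadd smult sdiff spow2 Kadd Kmult Kdiff Kpow2)

lemma sQw: "w \<in> K \<Longrightarrow> x \<in> K \<Longrightarrow> \<sigma> (Qw s w x) = Qw s (\<sigma> w) (\<sigma> x)"
  unfolding Qw_def by (rule sgen) (assumption | rule Kint sint)+

end

lemma quad_vieta:
  assumes "Qw s w a = 0" "Qw s w b = 0" "a \<noteq> b"
  shows "a + b = - (of_int (2 * (s^3-s^2+2 * s-1)) + of_int (2 * (s^2-s+1)) * w)"
    and "a * b = of_int (-(s^2+1)) - of_int s * w"
proof -
  have "Qw s w a - Qw s w b = (a - b) * (a + b + (of_int (2 * (s^3-s^2+2 * s-1)) + of_int (2 * (s^2-s+1)) * w))"
    unfolding Qw_def by (simp add: algebra_simps power2_eq_square)
  with assms show 1: "a + b = - (of_int (2 * (s^3-s^2+2 * s-1)) + of_int (2 * (s^2-s+1)) * w)"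
    by (simp add: add_eq_0_iff2 eq_neg_iff_add_eq_0)
  have "Qw s w a = a*a - (a+b)*a + (of_int (-(s^2+1)) - of_int s * w)"
    unfolding Qw_def 1 by (simp add: algebra_simps power2_eq_square)
  with assms(1) show "a * b = of_int (-(s^2+1)) - of_int s * w"
    by (simp add: algebra_simps)
qed

lemma quad_three:
  assumes "Qw s w a = 0" "Qw s w b = 0" "Qw s w c = 0" "a \<noteq> b" "a \<noteq> c" "b \<noteq> c"
  shows False
proof -
  have "a + b = a + c" using quad_vieta(1)[OF assms(1,2,4)] quad_vieta(1)[OF assms(1,3,5)] by simp
  with assms(6) show False by simp
qed




lemma ratio_ln:
  fixes \<rho> :: complex
  assumes nz: "\<rho> \<noteq> 0" and eq: "\<rho> + 1/\<rho> = of_real c"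
  shows "\<bar>ln (cmod \<rho>)\<bar> \<le> ln (max 1 \<bar>c\<bar>)"
proof -
  obtain x y where xy: "\<rho> = Complex x y" by (cases \<rho>)
  have n0: "x^2 + y^2 \<noteq> 0" using nz xy by (auto simp: complex_eq_iff)
  have "Im (\<rho> + 1/\<rho>) = 0" using eq by simp
  hence "y - y / (x^2+y^2) = 0" using xy by (simp add: Im_divide power2_eq_square)
  hence "y * ((x^2+y^2) - 1) = 0" using n0 by (simp add: field_simps)
  hence "y = 0 \<or> x^2 + y^2 = 1" by auto
  moreover have "0 \<le> ln (max 1 \<bar>c\<bar>)" by simp
  moreover
  { assume y0: "y = 0"
    hence x0: "x \<noteq> 0" using n0 by simp
    have "Re (\<rho> + 1/\<rho>) = c" using eq by simp
    hence cx: "x + 1/x = c" using xy y0 x0 by (simp add: Re_divide power2_eq_square)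
    have "\<bar>x\<bar> + 1/\<bar>x\<bar> = \<bar>c\<bar>"
    proof (cases "x > 0")
      case True
      hence "x + 1/x > 0" by (simp add: add_pos_pos)
      thus ?thesis using cx True by simp
    next
      case False
      hence "x < 0" using x0 by simp
      hence "x + 1/x < 0" by (simp add: add_neg_neg)
      thus ?thesis using cx \<open>x<0\<close> by simp
    qed
    hence b1: "\<bar>x\<bar> \<le> \<bar>c\<bar>" and b2: "1/\<bar>x\<bar> \<le> \<bar>c\<bar>" using x0 by (smt (verit) divide_pos_pos zero_less_abs_iff zero_less_one)+
    have cm: "cmod \<rho> = \<bar>x\<bar>" using xy y0 by (simp add: cmod_def)
    have ax: "0 < \<bar>x\<bar>" using x0 by simp
    have "ln \<bar>x\<bar> \<le> ln (max 1 \<bar>c\<bar>)" using b1 ax by simp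
    moreover have "- ln \<bar>x\<bar> \<le> ln (max 1 \<bar>c\<bar>)"
    proof -
      have "- ln \<bar>x\<bar> = ln (1/\<bar>x\<bar>)" using ax by (simp add: ln_div)
      also have "\<dots> \<le> ln (max 1 \<bar>c\<bar>)" using b2 ax by simp
      finally show ?thesis .
    qed
    ultimately have ?thesis using cm by (simp add: abs_le_iff) }
  moreover
  { assume "x^2 + y^2 = 1"
    hence "cmod \<rho> = 1" using xy by (simp add: cmod_def)
    hence ?thesis by simp }
  ultimately show ?thesis by blast
qed

definition Ur :: "int \<Rightarrow> real" where
  "Ur s = of_int (-4 * s^4 + 8 * s^3 - 16 * s^2 + 16 * s - 12)"
definition Vr :: "int \<Rightarrow> real" where
  "Vr s = of_int (-4 * s^3 + 8 * s^2 - 12 * s + 8)"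

lemma kappa:
  assumes "Qw s w a = 0" "Qw s w b = 0" "a \<noteq> b" "w = of_real wr" "wr^2 = of_int (s^2+2)"
  shows "a/b + b/a = of_real (Ur s + Vr s * wr - 2)"
    and "a * b = of_real (- (of_int s^2 + 1) - of_int s * wr)"
proof -
  have w2: "w^2 = of_int (s^2+2)" using assms(4,5)
    by (metis of_real_of_int_eq of_real_power)
  have s: "a + b = - (of_int (2 * (s^3-s^2+2 * s-1)) + of_int (2 * (s^2-s+1)) * w)"
    and p: "a * b = of_int (-(s^2+1)) - of_int s * w" using quad_vieta[OF assms(1-3)] by auto
  show "a * b = of_real (- (of_int s^2 + 1) - of_int s * wr)" using p assms(4) by simp
  have inv: "(of_int (-(s^2+1)) - of_int s * w) * (of_int (-(s^2+1)) + of_int s * w) = 1"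
    using w2 by simp algebra
  hence abnz: "a * b \<noteq> 0" using p by auto
  hence "a \<noteq> 0" "b \<noteq> 0" by auto
  hence "a/b + b/a = (a+b)^2/(a*b) - 2" by (simp add: field_simps power2_eq_square)
  also have "(a+b)^2 = (of_real (Ur s) + of_real (Vr s) * w) * (a*b)"
    unfolding s p Ur_def Vr_def using w2 by simp algebra
  finally show "a/b + b/a = of_real (Ur s + Vr s * wr - 2)" using abnz assms(4) by simp
qed




lemma int_bounds:
  fixes s :: int
  assumes s: "\<bar>s\<bar> \<ge> 10^5"
  shows "7 * (4 * s^4 - 8 * s^3 + 16 * s^2 - 16 * s + 12) \<ge> 16 * (s^2+1)^2"
    and "2 * (4 * s^4 - 8 * s^3 + 16 * s^2 - 16 * s + 12) + 2 \<le> 9 * s^4"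
    and "4 * s^4 - 8 * s^3 + 16 * s^2 - 16 * s + 12 > 0"
proof -
  define m where "m = \<bar>s\<bar>"
  have m: "m \<ge> 100000" using s m_def by simp
  have e4: "s^4 = m^4" and e2: "s^2 = m^2" unfolding m_def
    by (simp_all add: power_even_abs_numeral)
  have a3: "\<bar>s^3\<bar> = m^3" unfolding m_def by (simp add: power_abs)
  have e3: "s^3 \<le> m^3" "- (s^3) \<le> m^3" using a3 abs_ge_self[of "s^3"] abs_ge_minus_self[of "s^3"] by linarith+
  have e1: "s \<le> m" "-s \<le> m" unfolding m_def by auto
  have m2: "m^2 \<ge> 100000 * m" using m by (simp add: power2_eq_square)
  have m3: "m^3 \<ge> 100000 * m^2" using m by (simp add: power3_eq_cube power2_eq_square)
  have m4': "m^4 = m * m^3" by (simp add: power4_eq_xxxx power3_eq_cube)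
  have "m^3 \<ge> 0" using m by simp
  hence m4: "m^4 \<ge> 100000 * m^3" unfolding m4' using m mult_right_mono by blast
  have sq: "(m^2+1)^2 = m^4 + 2 * m^2 + 1" by (simp add: power2_eq_square power4_eq_xxxx algebra_simps)
  show "7 * (4 * s^4 - 8 * s^3 + 16 * s^2 - 16 * s + 12) \<ge> 16 * (s^2+1)^2"
  proof -
    have "12 * m^4 - 56 * m^3 + 80 * m^2 - 112 * m + 68 \<ge> 0" using m m2 m3 m4 by linarith
    moreover have "7 * (4 * s^4 - 8 * s^3 + 16 * s^2 - 16 * s + 12) - 16 * (s^2+1)^2
       = 12 * m^4 - 56 * s^3 + 80 * m^2 - 112 * s + 68"
      unfolding e4 e2 sq by (simp add: algebra_simps)
    ultimately show ?thesis using e3 e1 by linarith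
  qed
  show "2 * (4 * s^4 - 8 * s^3 + 16 * s^2 - 16 * s + 12) + 2 \<le> 9 * s^4"
  proof -
    have "9 * s^4 - (2 * (4 * s^4 - 8 * s^3 + 16 * s^2 - 16 * s + 12) + 2)
       = m^4 + 16 * s^3 - 32 * m^2 + 32 * s - 26"
      unfolding e4 e2 by (simp add: algebra_simps)
    moreover have "m^4 - 16 * m^3 - 32 * m^2 - 32 * m - 26 \<ge> 0" using m m2 m3 m4 by linarith
    ultimately show ?thesis using e3 e1 by linarith
  qed
  show "4 * s^4 - 8 * s^3 + 16 * s^2 - 16 * s + 12 > 0"
    unfolding e4 e2 using e3 e1 m m2 m3 m4 by linarith
qed

lemma core_bound:
  fixes X Y Um n P :: real
  assumes XY: "X \<le> Y" and sum: "X + Y = - 2 * Um" and prod: "X * Y = P"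
    and Um: "Um > 0" and h1: "7 * Um \<ge> P" and h2: "2 * Um + 2 \<le> 9 * n^4"
    and n: "n \<ge> 10^5" and P0: "P > 0"
  shows "ln (max 1 \<bar>X - 2\<bar>)^2 + ln (max 1 \<bar>Y - 2\<bar>)^2 < 18 * (ln n)^2"
proof -
  have X0: "X < 0" using XY sum Um by linarith
  have Y0: "Y < 0"
  proof (rule ccontr)
    assume "\<not> Y < 0"
    hence "X * Y \<le> 0" using X0 by (simp add: mult_nonpos_nonneg)
    thus False using prod P0 by simp
  qed
  have mx: "max 1 \<bar>X - 2\<bar> = 2 - X" "max 1 \<bar>Y - 2\<bar> = 2 - Y" using X0 Y0 by auto
  have XU: "- X \<ge> Um" using XY sum by linarith
  have "(- Y) * Um \<le> (- Y) * (- X)" using mult_left_mono[OF XU, of "-Y"] Y0 by linarith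
  also have "\<dots> = P" using prod by (simp add: mult.commute)
  finally have "(- Y) * Um \<le> 7 * Um" using h1 by linarith
  hence Y7: "- Y \<le> 7" using Um by (simp only: mult_le_cancel_right_pos)
  have Xb: "2 - X \<le> 9 * n^4" using h2 Y0 sum by linarith
  have npos: "n > 0" using n by simp
  define L where "L = ln n"
  have ln9: "5 * ln (9::real) \<le> L"
  proof -
    have "5 * ln (9::real) = ln (9^5)" using ln_realpow[of "9::real" 5] by simp
    also have "\<dots> \<le> ln n" using n by simp
    finally show ?thesis unfolding L_def .
  qed
  have Lpos: "L > 0" unfolding L_def using n by simp
  have A: "ln (2 - X) \<le> 21/5 * L"
  proof -
    have "ln (2 - X) \<le> ln (9 * n^4)" using Xb X0 npos by simp
    also have "\<dots> = ln 9 + 4 * L" using npos by (simp add: ln_mult ln_realpow L_def)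
    finally show ?thesis using ln9 by linarith
  qed
  have B: "ln (2 - Y) \<le> 1/5 * L"
  proof -
    have "ln (2 - Y) \<le> ln 9" using Y7 Y0 by simp
    thus ?thesis using ln9 by linarith
  qed
  have A0: "ln (2 - X) \<ge> 0" and B0: "ln (2 - Y) \<ge> 0" using X0 Y0 by simp_all
  have "ln (2 - X)^2 \<le> (21/5 * L)^2" using A A0 by (simp add: power_mono)
  moreover have "ln (2 - Y)^2 \<le> (1/5 * L)^2" using B B0 by (simp add: power_mono)
  moreover have "(21/5 * L)^2 + (1/5 * L)^2 < 18 * L^2" using Lpos by (simp add: power2_eq_square)
  ultimately show ?thesis unfolding mx L_def by linarith
qed

lemma final_bound:
  fixes s :: int and X Y :: real
  assumes s: "\<bar>s\<bar> \<ge> 10^5" and sum: "X + Y = 2 * Ur s"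
    and prod: "X * Y = 16 * (of_int s^2 + 1)^2"
  shows "ln (max 1 \<bar>X - 2\<bar>)^2 + ln (max 1 \<bar>Y - 2\<bar>)^2 < 18 * (ln \<bar>of_int s\<bar>)^2"
proof -
  define Um where "Um = - Ur s"
  define n where "n = \<bar>real_of_int s\<bar>"
  have "real_of_int (10^5) \<le> real_of_int \<bar>s\<bar>" using s by (simp only: of_int_le_iff)
  hence n: "n \<ge> 10^5" unfolding n_def by simp
  note ib = int_bounds[OF s]
  have Um0: "Um > 0" using ib(3) unfolding Um_def Ur_def by linarith
  have h1: "7 * Um \<ge> 16 * (of_int s^2 + 1)^2"
  proof -
    have "real_of_int (16 * (s^2+1)^2) \<le> of_int (7 * (4 * s^4 - 8 * s^3 + 16 * s^2 - 16 * s + 12))"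
      using ib(1) by linarith
    thus ?thesis unfolding Um_def Ur_def by simp
  qed
  have h2: "2 * Um + 2 \<le> 9 * n^4"
  proof -
    have "real_of_int (2 * (4 * s^4 - 8 * s^3 + 16 * s^2 - 16 * s + 12) + 2) \<le> of_int (9 * s^4)"
      using ib(2) by linarith
    moreover have "n^4 = of_int s ^ 4" unfolding n_def by (simp add: power_even_abs_numeral)
    ultimately show ?thesis unfolding Um_def Ur_def by simp
  qed
  have "real_of_int s^2 + 1 > 0" by (smt (verit) zero_le_power2)
  hence P0: "16 * (real_of_int s^2 + 1)^2 > 0" by simp
  have sum': "X + Y = - 2 * Um" using sum Um_def by simp
  show ?thesis
  proof (cases "X \<le> Y")
    case True
    show ?thesis using core_bound[OF True sum' prod Um0 h1 h2 n P0] n_def by simp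
  next
    case False
    hence "Y \<le> X" by simp
    from core_bound[OF this _ _ Um0 h1 h2 n P0] sum' prod show ?thesis unfolding n_def
      by (simp add: add.commute mult.commute)
  qed
qed




theorem mainTheorem10:
  fixes s :: int and r1 r2 r3 r4 :: complex and \<sigma> :: "complex \<Rightarrow> complex"
  assumes "\<bar>s\<bar> \<ge> 10^5"
    and "\<exists>m::int. 3 * s ^ 2 - 4 * s + 4 = m ^ 2"
    and "squarefree (s^2 + 2)"
    and "{r1, r2, r3, r4} = {z. poly (F_poly s) z = 0}"
    and "distinct [r1, r2, r3, r4]"
    and "generates_aut (gen_field {r1, r2, r3, r4}) \<sigma>"
    and "\<sigma> r1 = r2" and "\<sigma> r2 = r3" and "\<sigma> r3 = r4" and "\<sigma> r4 = r1"
    and "\<forall>z\<in>{r2, r3, r4}. cmod z < cmod r1"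
  shows "let a1 = ln (cmod r1); a2 = ln (cmod r2); a3 = ln (cmod r3); a4 = ln (cmod r4);
             R' = \<bar>det (vector [vector [a1, a2, a3], vector [a2, a3, a4],
                                  vector [a3, a4, a1]] :: real^3^3)\<bar>;
             \<epsilon> = real_of_int (s^2 + 1) + real_of_int \<bar>s\<bar> * sqrt (real_of_int (s^2 + 2))
         in R' = 1/4 * ((ln (cmod (r1 / r3)))^2 + (ln (cmod (r2 / r4)))^2) * (2 * ln \<epsilon>)
            \<and> R' / ln \<epsilon> < 9 * (ln \<bar>real_of_int s\<bar>)^2"
proof -
  define K where "K = gen_field {r1, r2, r3, r4}"
  have K: "subfield_C K" unfolding K_def by (rule subfield_gen)
  have A: "field_aut K \<sigma>" using assms(6) unfolding K_def generates_aut_def by auto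
  have rK: "r1 \<in> K" "r2 \<in> K" "r3 \<in> K" "r4 \<in> K" using subset_gen[of "{r1,r2,r3,r4}"] unfolding K_def by auto
  have roots: "\<And>z. poly (F_poly s) z = 0 \<longleftrightarrow> z \<in> {r1, r2, r3, r4}" using assms(4) by auto
  have dist: "r1 \<noteq> r2" "r1 \<noteq> r3" "r1 \<noteq> r4" "r2 \<noteq> r3" "r2 \<noteq> r4" "r3 \<noteq> r4"
    using assms(5) by auto
  define d where "d = sqrt (real_of_int (s^2+2))"
  have d2: "d^2 = of_int (s^2+2)" unfolding d_def
    by (simp add: add_nonneg_nonneg)
  have dpos: "d > 0" unfolding d_def by (simp add: add_nonneg_pos)
  have "poly (F_poly s) r1 = 0" using roots by simp
  moreover have "(complex_of_real d)^2 = of_int (s^2+2)" using d2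
    by (metis of_real_of_int_eq of_real_power)
  ultimately have "Qw s (of_real d) r1 = 0 \<or> Qw s (of_real (-d)) r1 = 0"
    using F_factor[of "of_real d" s r1] by simp
  then obtain wr where wr: "wr = d \<or> wr = -d" and q1: "Qw s (of_real wr) r1 = 0" by blast
  define w where "w = complex_of_real wr"
  have wr2: "wr^2 = of_int (s^2+2)" using wr d2 by auto
  have w2: "w^2 = of_int (s^2+2)" unfolding w_def using wr2
    by (metis of_real_of_int_eq of_real_power)
  have q1: "Qw s w r1 = 0" using q1 w_def by simp
  define P where "P = (of_int (2 * (s^3-s^2+2 * s-1)) :: complex)"
  define Q where "Q = (of_int (2 * (s^2-s+1)) :: complex)"
  define \<rho> where "\<rho> = - (P + Q * w) - r1"
  have "Qw s w \<rho> = Qw s w r1" unfolding Qw_def \<rho>_def P_def Q_def by simp algebra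
  hence "poly (F_poly s) \<rho> = 0" using q1 F_factor[OF w2] by simp
  hence \<rho>K: "\<rho> \<in> K" using roots rK by auto
  have "s * s \<ge> s"
  proof (cases "s \<le> 0")
    case True thus ?thesis using zero_le_square[of s] by linarith
  next
    case False thus ?thesis using mult_right_mono[of 1 s s] by simp
  qed
  hence "2 * (s^2 - s + 1) \<noteq> 0" by (simp add: power2_eq_square)
  hence Qnz: "Q \<noteq> 0" unfolding Q_def by (metis of_int_eq_0_iff)
  have "w = (of_int (-1) * (r1 + \<rho>) + of_int (-1) * P) * inverse Q"
    unfolding \<rho>_def using Qnz by (simp add: field_simps)
  moreover have "(of_int (-1) * (r1 + \<rho>) + of_int (-1) * P) * inverse Q \<in> K"
    unfolding P_def Q_def
    by (intro Kadd[OF K A] Kmult[OF K A] Kinv[OF K A] Kint[OF K A] rK \<rho>K)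
  ultimately have wK: "w \<in> K" by simp
  have mwK: "- w \<in> K" using Kneg[OF K A wK] .
  have "(\<sigma> w)^2 = \<sigma> (w^2)" using spow2[OF K A wK] by simp
  also have "\<dots> = w^2" unfolding w2 by (rule sint[OF K A])
  finally have sw: "\<sigma> w = w \<or> \<sigma> w = - w" by (simp add: power2_eq_iff)
  have step: "\<And>v x. v \<in> K \<Longrightarrow> x \<in> K \<Longrightarrow> Qw s v x = 0 \<Longrightarrow> Qw s (\<sigma> v) (\<sigma> x) = 0"
    using sQw[OF K A] s0[OF K A] by metis
  have sne: "\<sigma> w \<noteq> w"
  proof
    assume e: "\<sigma> w = w"
    have q2: "Qw s w r2 = 0" using step[OF wK rK(1) q1] e assms(7) by simp
    have q3: "Qw s w r3 = 0" using step[OF wK rK(2) q2] e assms(8) by simp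
    show False using quad_three[OF q1 q2 q3] dist by auto
  qed
  hence swm: "\<sigma> w = - w" using sw by simp
  have swm2: "\<sigma> (- w) = w" using sneg[OF K A wK] swm by simp
  have q2: "Qw s (- w) r2 = 0" using step[OF wK rK(1) q1] swm assms(7) by simp
  have q3: "Qw s w r3 = 0" using step[OF mwK rK(2) q2] swm2 assms(8) by simp
  have q4: "Qw s (- w) r4 = 0" using step[OF wK rK(3) q3] swm assms(9) by simp
  have mw: "- w = complex_of_real (- wr)" unfolding w_def by simp
  have mwr2: "(- wr)^2 = of_int (s^2+2)" using wr2 by simp
  note k13 = kappa[OF q1 q3 dist(2) w_def wr2]
  note k24 = kappa[OF q2 q4 dist(5) mw mwr2]
  have nz: "\<And>z. poly (F_poly s) z = 0 \<Longrightarrow> z \<noteq> 0" by (auto simp: F_poly_def)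
  have rnz: "r1 \<noteq> 0" "r2 \<noteq> 0" "r3 \<noteq> 0" "r4 \<noteq> 0" using roots nz by auto
  have cpos: "cmod r1 > 0" "cmod r2 > 0" "cmod r3 > 0" "cmod r4 > 0" using rnz by auto
  define a1 where "a1 = ln (cmod r1)"
  define a2 where "a2 = ln (cmod r2)"
  define a3 where "a3 = ln (cmod r3)"
  define a4 where "a4 = ln (cmod r4)"
  define t where "t = real_of_int s * wr"
  define e where "e = real_of_int s ^ 2 + 1 + t"
  define e' where "e' = real_of_int s ^ 2 + 1 - t"
  have ee: "e * e' = 1" unfolding e_def e'_def t_def
  proof -
    have "(real_of_int s ^ 2 + 1 + real_of_int s * wr) * (real_of_int s ^ 2 + 1 - real_of_int s * wr)
       = (real_of_int s ^ 2 + 1)^2 - real_of_int s ^ 2 * wr^2" by (simp add: algebra_simps power2_eq_square)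
    also have "\<dots> = 1" unfolding wr2 by (simp add: algebra_simps power2_eq_square)
    finally show "(real_of_int s ^ 2 + 1 + real_of_int s * wr) * (real_of_int s ^ 2 + 1 - real_of_int s * wr) = 1" .
  qed
  have ssum: "e + e' > 0" unfolding e_def e'_def by (smt (verit) zero_le_power2)
  have epos: "e > 0"
  proof (rule ccontr)
    assume "\<not> e > 0"
    hence "e * e' \<le> 0" using ssum by (simp add: mult_nonpos_nonneg)
    thus False using ee by simp
  qed
  have e'pos: "e' > 0"
  proof (rule ccontr)
    assume "\<not> e' > 0"
    hence "e * e' \<le> 0" using epos by (simp add: mult_nonneg_nonpos)
    thus False using ee by simp
  qed
  have "cmod (r1 * r3) = \<bar>- (of_int s^2 + 1) - of_int s * wr\<bar>" by (simp only: k13(2) norm_of_real)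
  hence c13: "cmod (r1 * r3) = e" using epos unfolding e_def t_def by simp
  have "cmod (r2 * r4) = \<bar>- (of_int s^2 + 1) - of_int s * (- wr)\<bar>" by (simp only: k24(2) norm_of_real)
  hence c24: "cmod (r2 * r4) = e'" using e'pos unfolding e'_def t_def by simp
  have "ln e = ln (cmod r1 * cmod r3)" using c13 by (simp add: norm_mult)
  also have "\<dots> = a1 + a3" unfolding a1_def a3_def by (rule ln_mult_pos[OF cpos(1) cpos(3)])
  finally have s13: "a1 + a3 = ln e" by simp
  have s24: "a2 + a4 = - ln e"
  proof -
    have "ln e' = ln (cmod r2 * cmod r4)" using c24 by (simp add: norm_mult)
    also have "\<dots> = a2 + a4" unfolding a2_def a4_def by (rule ln_mult_pos[OF cpos(2) cpos(4)])
    finally have "a2 + a4 = ln e'" by simp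
    also have "e' = 1 / e" using ee epos by (simp add: eq_divide_eq mult.commute)
    finally show ?thesis using epos by (simp add: ln_div)
  qed
  define \<epsilon> where "\<epsilon> = real_of_int (s^2 + 1) + real_of_int \<bar>s\<bar> * sqrt (real_of_int (s^2 + 2))"
  have abst: "\<bar>t\<bar> = real_of_int \<bar>s\<bar> * d" unfolding t_def using wr dpos by (auto simp: abs_mult)
  have "s \<noteq> 0" using assms(1) by auto
  hence "real_of_int \<bar>s\<bar> * d > 0" using dpos by simp
  hence eps1: "\<epsilon> > 1" unfolding \<epsilon>_def d_def[symmetric] by (simp add: add_nonneg_pos)
  have lneps: "ln \<epsilon> > 0" using eps1 by simp
  have labs: "\<bar>ln e\<bar> = ln \<epsilon>"
  proof (cases "t \<ge> 0")
    case True
    hence "e = \<epsilon>" using abst unfolding e_def \<epsilon>_def d_def by simp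
    thus ?thesis using lneps by simp
  next
    case False
    hence "e' = \<epsilon>" using abst unfolding e'_def \<epsilon>_def d_def by simp
    moreover have "ln e' = - ln e"
    proof -
      have "ln e + ln e' = ln (e * e')" using ln_mult_pos[OF epos e'pos] by simp
      thus ?thesis using ee by simp
    qed
    ultimately show ?thesis using lneps by simp
  qed
  have a4eq: "a4 = -(a1+a2+a3)" using s13 s24 by linarith
  have det: "det (vector [vector [a1, a2, a3], vector [a2, a3, a4], vector [a3, a4, a1]] :: real^3^3)
     = -(1/4) * (a1 - a2 + a3 - a4) * ((a1-a3)^2 + (a2-a4)^2)" by (rule det_formula[OF a4eq])
  have bb: "\<bar>a1 - a2 + a3 - a4\<bar> = 2 * ln \<epsilon>" using s13 s24 labs by linarith
  have l13: "ln (cmod (r1 / r3)) = a1 - a3" unfolding a1_def a3_def using cpos by (simp add: norm_divide ln_div)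
  have l24: "ln (cmod (r2 / r4)) = a2 - a4" unfolding a2_def a4_def using cpos by (simp add: norm_divide ln_div)
  define S where "S = (a1-a3)^2 + (a2-a4)^2"
  have Snn: "S \<ge> 0" unfolding S_def by simp
  have Rid: "\<bar>det (vector [vector [a1, a2, a3], vector [a2, a3, a4], vector [a3, a4, a1]] :: real^3^3)\<bar>
      = 1/4 * S * (2 * ln \<epsilon>)"
    unfolding det S_def using bb by (simp add: abs_mult)
  define X where "X = Ur s + Vr s * wr"
  define Y where "Y = Ur s + Vr s * (- wr)"
  have b13: "\<bar>a1 - a3\<bar> \<le> ln (max 1 \<bar>X - 2\<bar>)"
  proof -
    have "r1/r3 + 1/(r1/r3) = of_real (X - 2)" using k13(1) X_def by simp
    from ratio_ln[OF _ this] show ?thesis using rnz l13 by simp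
  qed
  have b24: "\<bar>a2 - a4\<bar> \<le> ln (max 1 \<bar>Y - 2\<bar>)"
  proof -
    have "r2/r4 + 1/(r2/r4) = of_real (Y - 2)" using k24(1) Y_def by simp
    from ratio_ln[OF _ this] show ?thesis using rnz l24 by simp
  qed
  have sq: "\<And>x y::real. \<bar>x\<bar> \<le> y \<Longrightarrow> x^2 \<le> y^2"
    by (metis abs_ge_zero power2_abs power_mono)
  have XYs: "X + Y = 2 * Ur s" unfolding X_def Y_def by simp
  have XYp: "X * Y = 16 * (of_int s^2 + 1)^2"
  proof -
    have "X * Y = Ur s ^ 2 - Vr s ^ 2 * wr^2" unfolding X_def Y_def by (simp add: algebra_simps power2_eq_square)
    also have "\<dots> = 16 * (of_int s^2 + 1)^2" unfolding wr2 Ur_def Vr_def by simp algebra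
    finally show ?thesis .
  qed
  have "S \<le> ln (max 1 \<bar>X - 2\<bar>)^2 + ln (max 1 \<bar>Y - 2\<bar>)^2"
    unfolding S_def using sq[OF b13] sq[OF b24] by linarith
  also have "\<dots> < 18 * (ln \<bar>of_int s\<bar>)^2" by (rule final_bound[OF assms(1) XYs XYp])
  finally have Sb: "S < 18 * (ln \<bar>of_int s\<bar>)^2" .
  have "1/4 * S * (2 * ln \<epsilon>) / ln \<epsilon> = S / 2" using lneps by simp
  hence R2: "1/4 * S * (2 * ln \<epsilon>) / ln \<epsilon> < 9 * (ln \<bar>real_of_int s\<bar>)^2" using Sb by simp
  have G1: "\<bar>det (vector [vector [a1, a2, a3], vector [a2, a3, a4], vector [a3, a4, a1]] :: real^3^3)\<bar>
      = 1/4 * ((a1-a3)^2 + (a2-a4)^2) * (2 * ln \<epsilon>)" using Rid unfolding S_def .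
  have G2: "\<bar>det (vector [vector [a1, a2, a3], vector [a2, a3, a4], vector [a3, a4, a1]] :: real^3^3)\<bar>
      / ln \<epsilon> < 9 * (ln \<bar>real_of_int s\<bar>)^2" unfolding Rid using R2 .
  show ?thesis unfolding Let_def a1_def[symmetric] a2_def[symmetric] a3_def[symmetric] a4_def[symmetric]
      \<epsilon>_def[symmetric] l13 l24 using G1 G2 by blast
qed

end
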